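(* Up to multiplication by a positive integer, every basic weight of a basic system of type $A$ is one of the following (written in coordinates $(\lambda_1,\dots,\lambda_{n+1})$, $\lambda_k=\langle\lambda,e_k\rangle$): (1) $(A_1,1,1)$: $(\tfrac12,-\tfrac12)$, $(-\tfrac12,\tfrac12)$; (2) $(A_2,1,1)$: $(-\tfrac13,\tfrac23,-\tfrac13)$; (3) $(A_2,1,2)$: $(\tfrac13,\tfrac13,-\tfrac23)$; (4) $(A_2,2,1)$: $(\tfrac23,-\tfrac13,-\tfrac13)$; (5) $(A_2,2,2)$: $(\tfrac13,-\tfrac23,\tfrac13)$; (6) $(A_3,2,2)$: $(\tfrac12,-\tfrac12,\tfrac12,-\tfrac12)$.
   Context: $A_n$ is realized in the hyperplane $\{\sum x_k=0\}$ of $\mathbb R^{n+1}$ with orthonormal basis $e_1,\dots,e_{n+1}$ and standard inner product, with simple roots $\alpha_k=e_k-e_{k+1}$. Let $W$ be the Weyl group, $\alpha^\vee=2\alpha/\langle\alpha,\alpha\rangle$. A weight is integral if $\langle\lambda,\alpha^\vee\rangle\in\mathbb Z$ for all roots $\alpha$; $\overline\lambda$ is the dominant weight in $W\lambda$. For $I=\Delta\setminus\{\alpha_i\}$, $J=\Delta\setminus\{\alpha_j\}$, a basic weight of $(\Phi,i,j)$ is an integral $\lambda$ with $\langle\lambda,\alpha^\vee\rangle\in\mathbb Z_{>0}$ for all $\alpha\in I$ and $\{\alpha\in\Delta:\langle\overline\lambda,\alpha\rangle=0\}=J$; $(\Phi,i,j)$ is a basic system if it has a basic weight. *)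

theory Defs
  imports Complex_Main
begin

text \<open>Root system A_n realized in the hyperplane sum x_k = 0 of R^(n+1).
  Vectors of R^(n+1) are functions nat => real, coordinates indexed by 1..n+1
  (all other coordinates are 0).\<close>

definition ip :: "nat \<Rightarrow> (nat \<Rightarrow> real) \<Rightarrow> (nat \<Rightarrow> real) \<Rightarrow> real" where
  "ip n x y = (\<Sum>k = 1..n+1. x k * y k)"

definition ebasis :: "nat \<Rightarrow> nat \<Rightarrow> real" where
  "ebasis a = (\<lambda>t. if t = a then 1 else 0)"

definition vdiff :: "(nat \<Rightarrow> real) \<Rightarrow> (nat \<Rightarrow> real) \<Rightarrow> nat \<Rightarrow> real" where
  "vdiff x y = (\<lambda>t. x t - y t)"

definition vscale :: "real \<Rightarrow> (nat \<Rightarrow> real) \<Rightarrow> nat \<Rightarrow> real" where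
  "vscale c x = (\<lambda>t. c * x t)"

definition Vspace :: "nat \<Rightarrow> (nat \<Rightarrow> real) set" where
  "Vspace n = {x. (\<forall>k. k \<notin> {1..n+1} \<longrightarrow> x k = 0) \<and> (\<Sum>k = 1..n+1. x k) = 0}"

definition roots :: "nat \<Rightarrow> (nat \<Rightarrow> real) set" where
  "roots n = {vdiff (ebasis a) (ebasis b) | a b. a \<in> {1..n+1} \<and> b \<in> {1..n+1} \<and> a \<noteq> b}"

definition simple_root :: "nat \<Rightarrow> nat \<Rightarrow> real" where
  "simple_root k = vdiff (ebasis k) (ebasis (Suc k))"

definition simple_roots :: "nat \<Rightarrow> (nat \<Rightarrow> real) set" where
  "simple_roots n = simple_root ` {1..n}"

definition coroot :: "nat \<Rightarrow> (nat \<Rightarrow> real) \<Rightarrow> nat \<Rightarrow> real" where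
  "coroot n \<alpha> = vscale (2 / ip n \<alpha> \<alpha>) \<alpha>"

definition reflection :: "nat \<Rightarrow> (nat \<Rightarrow> real) \<Rightarrow> (nat \<Rightarrow> real) \<Rightarrow> nat \<Rightarrow> real" where
  "reflection n \<alpha> x = vdiff x (vscale (ip n x (coroot n \<alpha>)) \<alpha>)"

inductive_set weyl_orbit :: "nat \<Rightarrow> (nat \<Rightarrow> real) \<Rightarrow> (nat \<Rightarrow> real) set"
  for n :: nat and lam :: "nat \<Rightarrow> real" where
  base: "lam \<in> weyl_orbit n lam"
| step: "\<mu> \<in> weyl_orbit n lam \<Longrightarrow> \<alpha> \<in> roots n \<Longrightarrow> reflection n \<alpha> \<mu> \<in> weyl_orbit n lam"

definition dominant :: "nat \<Rightarrow> (nat \<Rightarrow> real) \<Rightarrow> bool" where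
  "dominant n \<mu> \<longleftrightarrow> (\<forall>\<alpha> \<in> simple_roots n. ip n \<mu> (coroot n \<alpha>) \<ge> 0)"

definition dom_weight :: "nat \<Rightarrow> (nat \<Rightarrow> real) \<Rightarrow> nat \<Rightarrow> real" where
  "dom_weight n lam = (THE \<mu>. \<mu> \<in> weyl_orbit n lam \<and> dominant n \<mu>)"

definition integral_weight :: "nat \<Rightarrow> (nat \<Rightarrow> real) \<Rightarrow> bool" where
  "integral_weight n lam \<longleftrightarrow> lam \<in> Vspace n \<and> (\<forall>\<alpha> \<in> roots n. ip n lam (coroot n \<alpha>) \<in> \<int>)"

definition basic_weight :: "nat \<Rightarrow> nat \<Rightarrow> nat \<Rightarrow> (nat \<Rightarrow> real) \<Rightarrow> bool" where
  "basic_weight n i j lam \<longleftrightarrow>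
     integral_weight n lam \<and>
     (\<forall>\<alpha> \<in> simple_roots n - {simple_root i}.
         ip n lam (coroot n \<alpha>) \<in> \<int> \<and> ip n lam (coroot n \<alpha>) > 0) \<and>
     {\<alpha> \<in> simple_roots n. ip n (dom_weight n lam) \<alpha> = 0} = simple_roots n - {simple_root j}"

definition basic_system :: "nat \<Rightarrow> nat \<Rightarrow> nat \<Rightarrow> bool" where
  "basic_system n i j \<longleftrightarrow> (\<exists>lam. basic_weight n i j lam)"

definition coords :: "real list \<Rightarrow> nat \<Rightarrow> real" where
  "coords xs = (\<lambda>k. if 1 \<le> k \<and> k \<le> length xs then xs ! (k - 1) else 0)"

definition listed_weights :: "nat \<Rightarrow> nat \<Rightarrow> nat \<Rightarrow> (nat \<Rightarrow> real) set" where
  "listed_weights n i j =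
     (if (n, i, j) = (1, 1, 1) then {coords [1/2, -1/2], coords [-1/2, 1/2]}
      else if (n, i, j) = (2, 1, 1) then {coords [-1/3, 2/3, -1/3]}
      else if (n, i, j) = (2, 1, 2) then {coords [1/3, 1/3, -2/3]}
      else if (n, i, j) = (2, 2, 1) then {coords [2/3, -1/3, -1/3]}
      else if (n, i, j) = (2, 2, 2) then {coords [1/3, -2/3, 1/3]}
      else if (n, i, j) = (3, 2, 2) then {coords [1/2, -1/2, 1/2, -1/2]}
      else {})"

end

theory Submission
  imports Defs "HOL-Combinatorics.Permutations"
begin

lemma ip_vdiff: "ip n x (vdiff y z) = ip n x y - ip n x z"
  by (simp add: ip_def vdiff_def algebra_simps sum_subtractf)

lemma ip_vscale: "ip n x (vscale c y) = c * ip n x y"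
  by (simp add: ip_def vscale_def algebra_simps sum_distrib_left)

lemma ip_ebasis: "a \<in> {1..n+1} \<Longrightarrow> ip n x (ebasis a) = x a"
  by (simp add: ip_def ebasis_def if_distrib cong: if_cong)

lemma ip_root_self:
  assumes "a \<in> {1..n+1}" "b \<in> {1..n+1}" "a \<noteq> b"
  shows "ip n (vdiff (ebasis a) (ebasis b)) (vdiff (ebasis a) (ebasis b)) = 2"
proof -
  have "ip n (vdiff (ebasis a) (ebasis b)) (vdiff (ebasis a) (ebasis b))
    = ip n (vdiff (ebasis a) (ebasis b)) (ebasis a) - ip n (vdiff (ebasis a) (ebasis b)) (ebasis b)"
    by (rule ip_vdiff)
  also have "\<dots> = 2" using assms by (simp only: ip_ebasis) (simp add: vdiff_def ebasis_def)
  finally show ?thesis .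
qed

lemma coroot_root:
  assumes "a \<in> {1..n+1}" "b \<in> {1..n+1}" "a \<noteq> b"
  shows "coroot n (vdiff (ebasis a) (ebasis b)) = vdiff (ebasis a) (ebasis b)"
  using ip_root_self[OF assms] by (simp add: coroot_def vscale_def)

lemma ip_coroot:
  assumes "a \<in> {1..n+1}" "b \<in> {1..n+1}" "a \<noteq> b"
  shows "ip n x (coroot n (vdiff (ebasis a) (ebasis b))) = x a - x b"
  using assms by (simp add: coroot_root ip_vdiff ip_ebasis)

lemma ip_simple: "k \<in> {1..n} \<Longrightarrow> ip n x (coroot n (simple_root k)) = x k - x (Suc k)"
  unfolding simple_root_def by (rule ip_coroot) auto

lemma ip_simple': "k \<in> {1..n} \<Longrightarrow> ip n x (simple_root k) = x k - x (Suc k)"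
  unfolding simple_root_def by (simp add: ip_vdiff ip_ebasis)

lemma simple_root_inj: "simple_root k = simple_root k' \<Longrightarrow> k = k'"
  unfolding simple_root_def vdiff_def ebasis_def
  by (drule fun_cong[where x=k]) (auto split: if_splits)

lemma simple_in_roots: "k \<in> {1..n} \<Longrightarrow> simple_root k \<in> roots n"
  unfolding simple_root_def roots_def
  apply (rule CollectI)
  apply (rule exI[of _ k], rule exI[of _ "Suc k"])
  by auto

lemma reflection_transpose:
  assumes "a \<in> {1..n+1}" "b \<in> {1..n+1}" "a \<noteq> b"
  shows "reflection n (vdiff (ebasis a) (ebasis b)) x = x \<circ> transpose a b"
  unfolding reflection_def ip_coroot[OF assms]
  using assms by (auto simp: vdiff_def vscale_def ebasis_def transpose_def fun_eq_iff)

lemma orbit_perm: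
  assumes "\<mu> \<in> weyl_orbit n lam"
  shows "\<exists>\<sigma>. \<sigma> permutes {1..n+1} \<and> \<mu> = lam \<circ> \<sigma>"
  using assms
proof induction
  case base
  then show ?case using permutes_id[of "{1..n+1}"] by (metis comp_id)
next
  case (step \<mu> \<alpha>)
  then obtain \<sigma> where s: "\<sigma> permutes {1..n+1}" "\<mu> = lam \<circ> \<sigma>" by blast
  from \<open>\<alpha> \<in> roots n\<close> obtain a b where ab: "\<alpha> = vdiff (ebasis a) (ebasis b)" "a \<in> {1..n+1}" "b \<in> {1..n+1}" "a \<noteq> b"
    unfolding roots_def by blast
  have "reflection n \<alpha> \<mu> = lam \<circ> (\<sigma> \<circ> transpose a b)"
    using reflection_transpose[OF ab(2-4)] ab(1) s(2) by (simp add: comp_assoc)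
  moreover have "\<sigma> \<circ> transpose a b permutes {1..n+1}"
    using permutes_compose[OF permutes_swap_id[OF ab(2,3)] s(1)] .
  ultimately show ?case by blast
qed

lemma orbit_finite: "finite (weyl_orbit n lam)"
proof -
  have "weyl_orbit n lam \<subseteq> (\<lambda>\<sigma>. lam \<circ> \<sigma>) ` {\<sigma>. \<sigma> permutes {1..n+1}}"
    using orbit_perm by blast
  moreover have "finite ((\<lambda>\<sigma>. lam \<circ> \<sigma>) ` {\<sigma>. \<sigma> permutes {1..n+1}})"
    by (intro finite_imageI finite_permutations) simp
  ultimately show ?thesis by (rule finite_subset)
qed

definition phi :: "nat \<Rightarrow> (nat \<Rightarrow> real) \<Rightarrow> real" where
  "phi n x = (\<Sum>t = 1..n+1. real t * x t)"

lemma phi_refl: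
  assumes "k \<in> {1..n}"
  shows "phi n (reflection n (simple_root k) x) = phi n x + (x k - x (Suc k))"
proof -
  have c: "ip n x (coroot n (simple_root k)) = x k - x (Suc k)" using ip_simple[OF assms] .
  have r: "reflection n (simple_root k) x = vdiff x (vscale (x k - x (Suc k)) (simple_root k))"
    unfolding reflection_def c ..
  have "phi n (reflection n (simple_root k) x) =
     phi n x - (x k - x (Suc k)) * (\<Sum>t = 1..n+1. real t * (ebasis k t - ebasis (Suc k) t))"
  proof -
    define c where "c = x k - x (Suc k)"
    have "(\<Sum>t=1..n+1. real t * (x t - c*(ebasis k t - ebasis (Suc k) t))) =
       (\<Sum>t=1..n+1. real t * x t - c*(real t*(ebasis k t - ebasis (Suc k) t)))"
      by (rule sum.cong) (auto simp: algebra_simps)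
    also have "\<dots> = (\<Sum>t=1..n+1. real t * x t) - c*(\<Sum>t=1..n+1. real t*(ebasis k t - ebasis (Suc k) t))"
      by (simp only: sum_subtractf sum_distrib_left)
    finally show ?thesis unfolding r phi_def c_def[symmetric]
      by (simp add: vdiff_def vscale_def simple_root_def)
  qed
  also have "(\<Sum>t = 1..n+1. real t * (ebasis k t - ebasis (Suc k) t)) = -1"
  proof -
    have d: "(\<Sum>t = 1..n+1. real t * ebasis a t) = real a" if "a \<in> {1..n+1}" for a
    proof -
      have "(\<Sum>t = 1..n+1. real t * ebasis a t) = (\<Sum>t = 1..n+1. if t = a then real a else 0)"
        by (rule sum.cong) (auto simp: ebasis_def)
      also have "\<dots> = real a" using that by (simp add: sum.delta)
      finally show ?thesis .
    qed
    have "(\<Sum>t = 1..n+1. real t * (ebasis k t - ebasis (Suc k) t)) =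
      (\<Sum>t = 1..n+1. real t * ebasis k t) - (\<Sum>t = 1..n+1. real t * ebasis (Suc k) t)"
      by (simp add: right_diff_distrib sum_subtractf)
    also have "\<dots> = -1" using assms d[of k] d[of "Suc k"] by simp
    finally show ?thesis .
  qed
  finally show ?thesis by simp
qed

lemma dominant_exists: "\<exists>\<mu>\<in>weyl_orbit n lam. dominant n \<mu>"
proof -
  let ?O = "weyl_orbit n lam"
  have fin: "finite (phi n ` ?O)" using orbit_finite by simp
  have ne: "phi n ` ?O \<noteq> {}" using weyl_orbit.base by blast
  from Min_in[OF fin ne] obtain \<mu> where mu: "\<mu> \<in> ?O" "phi n \<mu> = Min (phi n ` ?O)" by auto
  have le: "phi n \<mu> \<le> phi n \<nu>" if "\<nu> \<in> ?O" for \<nu>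
    using Min_le[OF fin] that mu(2) by auto
  have "dominant n \<mu>"
    unfolding dominant_def simple_roots_def
  proof
    fix \<alpha> assume "\<alpha> \<in> simple_root ` {1..n}"
    then obtain k where k: "k \<in> {1..n}" "\<alpha> = simple_root k" by blast
    have "reflection n (simple_root k) \<mu> \<in> ?O"
      by (rule weyl_orbit.step[OF mu(1) simple_in_roots[OF k(1)]])
    then have "phi n \<mu> \<le> phi n \<mu> + (\<mu> k - \<mu> (Suc k))"
      using le phi_refl[OF k(1)] by metis
    then show "0 \<le> ip n \<mu> (coroot n \<alpha>)" using k ip_simple by simp
  qed
  with mu show ?thesis by blast
qed

lemma dom_mono:
  assumes "dominant n \<mu>" "s \<le> t" "1 \<le> s" "t \<le> n+1"
  shows "\<mu> t \<le> \<mu> s"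
proof -
  have "t \<le> n+1 \<longrightarrow> \<mu> t \<le> \<mu> s"
    using assms(2)
  proof (induction t rule: dec_induct)
    case base
    then show ?case by simp
  next
    case (step m)
    show ?case
    proof
      assume "Suc m \<le> n+1"
      then have m: "m \<in> {1..n}" using step(1) assms(3) by auto
      then have "simple_root m \<in> simple_roots n" by (simp add: simple_roots_def)
      then have "0 \<le> \<mu> m - \<mu> (Suc m)" using assms(1) ip_simple[OF m] unfolding dominant_def by metis
      then show "\<mu> (Suc m) \<le> \<mu> s" using step(3) \<open>Suc m \<le> n+1\<close> by simp
    qed
  qed
  then show ?thesis using assms by simp
qed

lemma card_perm:
  assumes "\<sigma> permutes S"
  shows "card {t\<in>S. P (\<sigma> t)} = card {t\<in>S. P t}"
proof -
  have "{t\<in>S. P t} = \<sigma> ` {t\<in>S. P (\<sigma> t)}"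
  proof
    show "{t\<in>S. P t} \<subseteq> \<sigma> ` {t\<in>S. P (\<sigma> t)}"
    proof
      fix t assume "t \<in> {t\<in>S. P t}"
      then show "t \<in> \<sigma> ` {t\<in>S. P (\<sigma> t)}"
        using permutes_inverses(1)[OF assms, of t] permutes_in_image[OF assms, of "inv \<sigma> t"]
        by (metis (mono_tags, lifting) image_eqI mem_Collect_eq)
    qed
    show "\<sigma> ` {t\<in>S. P (\<sigma> t)} \<subseteq> {t\<in>S. P t}"
      using permutes_in_image[OF assms] by auto
  qed
  moreover have "inj_on \<sigma> {t\<in>S. P (\<sigma> t)}"
    using permutes_inj[OF assms] by (simp add: inj_on_def inj_def)
  ultimately show ?thesis by (simp add: card_image)
qed

lemma uniq_aux:
  assumes "\<sigma> permutes {1..n+1}" "\<tau> permutes {1..n+1}"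
    and "dominant n (lam \<circ> \<sigma>)" "dominant n (lam \<circ> \<tau>)" and k: "k \<in> {1..n+1}"
  shows "\<not> (lam (\<sigma> k) > lam (\<tau> k))"
proof
  assume gt: "lam (\<sigma> k) > lam (\<tau> k)"
  define c where "c = lam (\<sigma> k)"
  let ?S = "{1..n+1}"
  have cA: "card {t\<in>?S. c \<le> lam (\<sigma> t)} = card {t\<in>?S. c \<le> lam t}"
    by (rule card_perm[OF assms(1)])
  have cB: "card {t\<in>?S. c \<le> lam (\<tau> t)} = card {t\<in>?S. c \<le> lam t}"
    by (rule card_perm[OF assms(2)])
  have "{1..k} \<subseteq> {t\<in>?S. c \<le> lam (\<sigma> t)}"
  proof
    fix t assume t: "t \<in> {1..k}"
    have "(lam \<circ> \<sigma>) k \<le> (lam \<circ> \<sigma>) t"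
      by (rule dom_mono[OF assms(3)]) (use t k in auto)
    then show "t \<in> {t\<in>?S. c \<le> lam (\<sigma> t)}" using t k by (auto simp: c_def)
  qed
  then have "k \<le> card {t\<in>?S. c \<le> lam (\<sigma> t)}"
    using card_mono[of "{t\<in>?S. c \<le> lam (\<sigma> t)}" "{1..k}"] by simp
  moreover have "{t\<in>?S. c \<le> lam (\<tau> t)} \<subseteq> {1..k-1}"
  proof
    fix t assume t: "t \<in> {t\<in>?S. c \<le> lam (\<tau> t)}"
    show "t \<in> {1..k-1}"
    proof (rule ccontr)
      assume "t \<notin> {1..k-1}"
      then have "k \<le> t" using t by auto
      then have "(lam \<circ> \<tau>) t \<le> (lam \<circ> \<tau>) k"
        using dom_mono[OF assms(4)] t k by auto
      then show False using t gt by (auto simp: c_def)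
    qed
  qed
  then have "card {t\<in>?S. c \<le> lam (\<tau> t)} \<le> k - 1"
    using card_mono[of "{1..k-1}"] by fastforce
  ultimately show False using cA cB k by auto
qed

lemma dominant_unique:
  assumes "\<mu> \<in> weyl_orbit n lam" "\<nu> \<in> weyl_orbit n lam" "dominant n \<mu>" "dominant n \<nu>"
  shows "\<mu> = \<nu>"
proof -
  obtain \<sigma> where s: "\<sigma> permutes {1..n+1}" "\<mu> = lam \<circ> \<sigma>" using orbit_perm[OF assms(1)] by blast
  obtain \<tau> where t: "\<tau> permutes {1..n+1}" "\<nu> = lam \<circ> \<tau>" using orbit_perm[OF assms(2)] by blast
  show ?thesis
  proof
    fix k
    show "\<mu> k = \<nu> k"
    proof (cases "k \<in> {1..n+1}")
      case True
      then show ?thesis using uniq_aux[OF s(1) t(1), of lam k] uniq_aux[OF t(1) s(1), of lam k]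
        assms(3,4) s(2) t(2) by force
    next
      case False
      then show ?thesis using permutes_not_in[OF s(1) False] permutes_not_in[OF t(1) False] s t by simp
    qed
  qed
qed

lemma dom_weight_props:
  "dom_weight n lam \<in> weyl_orbit n lam \<and> dominant n (dom_weight n lam)"
proof -
  have "\<exists>!\<mu>. \<mu> \<in> weyl_orbit n lam \<and> dominant n \<mu>"
    using dominant_exists dominant_unique by blast
  then show ?thesis unfolding dom_weight_def by (rule theI')
qed

lemma vec_eq:
  assumes "lam \<in> Vspace n" "length xs = n+1" "\<forall>k\<in>{1..n+1}. lam k = c * xs!(k-1)"
  shows "lam = vscale c (coords xs)"
proof
  fix k show "lam k = vscale c (coords xs) k"
    using assms by (cases "k \<in> {1..n+1}") (auto simp: Vspace_def vscale_def coords_def)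
qed

lemma case_n1:
  assumes V: "lam \<in> Vspace 1" and "i \<in> {1..1}" "j \<in> {1..1}"
    and "lam 1 = a \<or> lam 1 = b" "lam 2 = a \<or> lam 2 = b"
    and "a > b" "a - b = real m" "real j * a + real (2 - j) * b = 0"
    and "lam 1 + lam 2 = 0"
  shows "\<exists>\<mu>\<in>listed_weights 1 i j. lam = vscale (real m) \<mu>"
proof -
  have ij: "i = 1" "j = 1" using assms(2,3) by auto
  have ab: "a = real m / 2" "b = - real m / 2" using assms ij by auto
  consider "lam 1 = a" "lam 2 = b" | "lam 1 = b" "lam 2 = a" using assms by (auto; linarith)
  then show ?thesis
  proof cases
    case 1
    have "lam = vscale (real m) (coords [1/2, -1/2])"
      by (rule vec_eq[OF V]) (use 1 ab in \<open>auto simp: le_Suc_eq eval_nat_numeral\<close>)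
    then show ?thesis using ij by (simp add: listed_weights_def)
  next
    case 2
    have "lam = vscale (real m) (coords [-1/2, 1/2])"
      by (rule vec_eq[OF V]) (use 2 ab in \<open>auto simp: le_Suc_eq eval_nat_numeral\<close>)
    then show ?thesis using ij by (simp add: listed_weights_def)
  qed
qed

lemma case_n2:
  assumes V: "lam \<in> Vspace 2" and "i \<in> {1..2}" "j \<in> {1..2}"
    and h1: "lam 1 = a \<or> lam 1 = b" and h2: "lam 2 = a \<or> lam 2 = b" and h3: "lam 3 = a \<or> lam 3 = b"
    and ab: "a > b" and am: "a - b = real m" and hj: "real j * a + real (3 - j) * b = 0"
    and hs: "lam 1 + lam 2 + lam 3 = 0"
    and k1: "i \<noteq> 1 \<longrightarrow> lam 1 > lam 2" and k2: "i \<noteq> 2 \<longrightarrow> lam 2 > lam 3"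
  shows "\<exists>\<mu>\<in>listed_weights 2 i j. lam = vscale (real m) \<mu>"
proof -
  have i: "i = 1 \<or> i = 2" using assms(2) by auto
  have j: "j = 1 \<or> j = 2" using assms(3) by auto
  from i j consider "i = 1" "j = 1" | "i = 1" "j = 2" | "i = 2" "j = 1" | "i = 2" "j = 2" by blast
  then show ?thesis
  proof cases
    case 1
    have c: "a + 2 * b = 0" "lam 2 > lam 3" using hj k2 1 by auto
    have e: "lam 1 = - real m / 3 \<and> lam 2 = 2 * real m / 3 \<and> lam 3 = - real m / 3"
    proof -
        have w1: "lam 2 = a" "lam 3 = b" "lam 1 = b" using h1 h2 h3 ab hs c by linarith+
        then show ?thesis using am c by auto
      qed
    have "lam = vscale (real m) (coords [-1/3, 2/3, -1/3])"
      by (rule vec_eq[OF V]) (use e in \<open>auto simp: le_Suc_eq eval_nat_numeral\<close>)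
    then show ?thesis using 1 by (simp add: listed_weights_def)
  next
    case 2
    have c: "2 * a + b = 0" "lam 2 > lam 3" using hj k2 2 by auto
    have e: "lam 1 = real m / 3 \<and> lam 2 = real m / 3 \<and> lam 3 = - 2 * real m / 3"
    proof -
        have w1: "lam 2 = a" "lam 3 = b" "lam 1 = a" using h1 h2 h3 ab hs c by linarith+
        then show ?thesis using am c by auto
      qed
    have "lam = vscale (real m) (coords [1/3, 1/3, -2/3])"
      by (rule vec_eq[OF V]) (use e in \<open>auto simp: le_Suc_eq eval_nat_numeral\<close>)
    then show ?thesis using 2 by (simp add: listed_weights_def)
  next
    case 3
    have c: "a + 2 * b = 0" "lam 1 > lam 2" using hj k1 3 by auto
    have e: "lam 1 = 2 * real m / 3 \<and> lam 2 = - real m / 3 \<and> lam 3 = - real m / 3"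
    proof -
        have w1: "lam 2 = b" "lam 3 = b" "lam 1 = a" using h1 h2 h3 ab hs c by linarith+
        then show ?thesis using am c by auto
      qed
    have "lam = vscale (real m) (coords [2/3, -1/3, -1/3])"
      by (rule vec_eq[OF V]) (use e in \<open>auto simp: le_Suc_eq eval_nat_numeral\<close>)
    then show ?thesis using 3 by (simp add: listed_weights_def)
  next
    case 4
    have c: "2 * a + b = 0" "lam 1 > lam 2" using hj k1 4 by auto
    have e: "lam 1 = real m / 3 \<and> lam 2 = - 2 * real m / 3 \<and> lam 3 = real m / 3"
    proof -
        have w1: "lam 2 = b" "lam 3 = a" "lam 1 = a" using h1 h2 h3 ab hs c by linarith+
        then show ?thesis using am c by auto
      qed
    have "lam = vscale (real m) (coords [1/3, -2/3, 1/3])"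
      by (rule vec_eq[OF V]) (use e in \<open>auto simp: le_Suc_eq eval_nat_numeral\<close>)
    then show ?thesis using 4 by (simp add: listed_weights_def)
  qed
qed

lemma case_n3:
  assumes V: "lam \<in> Vspace 3" and "i \<in> {1..3}" "j \<in> {1..3}"
    and h1: "lam 1 = a \<or> lam 1 = b" and h2: "lam 2 = a \<or> lam 2 = b" and h3: "lam 3 = a \<or> lam 3 = b"
    and h4: "lam 4 = a \<or> lam 4 = b"
    and ab: "a > b" and am: "a - b = real m" and hj: "real j * a + real (4 - j) * b = 0"
    and hs: "lam 1 + lam 2 + lam 3 + lam 4 = 0"
    and k1: "i \<noteq> 1 \<longrightarrow> lam 1 > lam 2" and k2: "i \<noteq> 2 \<longrightarrow> lam 2 > lam 3"
    and k3: "i \<noteq> 3 \<longrightarrow> lam 3 > lam 4"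
  shows "\<exists>\<mu>\<in>listed_weights 3 i j. lam = vscale (real m) \<mu>"
proof -
  have i3: "i = 1 \<or> i = 2 \<or> i = 3" using assms(2) by auto
  have i: "i = 2"
  proof (rule ccontr)
    assume "i \<noteq> 2"
    then have "(lam 1 > lam 2 \<and> lam 2 > lam 3) \<or> (lam 2 > lam 3 \<and> lam 3 > lam 4)"
      using i3 k1 k2 k3 by auto
    then show False using h1 h2 h3 h4 by linarith
  qed
  have c: "lam 1 > lam 2" "lam 3 > lam 4" using k1 k3 i by auto
  have v1: "lam 1 = a \<and> lam 2 = b" using c(1) h1 h2 ab by linarith
  have v2: "lam 3 = a \<and> lam 4 = b" using c(2) h3 h4 ab by linarith
  have v: "lam 1 = a" "lam 2 = b" "lam 3 = a" "lam 4 = b" using v1 v2 by auto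
  have j3: "j = 1 \<or> j = 2 \<or> j = 3" using assms(3) by auto
  have ab0: "a + b = 0" using hs v by simp
  have j: "j = 2"
  proof (rule ccontr)
    assume "j \<noteq> 2"
    then have "a + 3 * b = 0 \<or> 3 * a + b = 0" using j3 hj by (auto simp: eval_nat_numeral)
    then show False using ab0 ab by auto
  qed
  have e: "lam 1 = real m / 2 \<and> lam 2 = - real m / 2 \<and> lam 3 = real m / 2 \<and> lam 4 = - real m / 2"
    using v ab0 am by auto
  have "lam = vscale (real m) (coords [1/2, -1/2, 1/2, -1/2])"
    by (rule vec_eq[OF V]) (use e in \<open>auto simp: le_Suc_eq eval_nat_numeral\<close>)
  then show ?thesis using i j by (simp add: listed_weights_def)
qed

theorem theorem5p7:
  fixes n i j :: nat and lam :: "nat \<Rightarrow> real"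
  assumes "n \<ge> 1" and "i \<in> {1..n}" and "j \<in> {1..n}"
    and "basic_system n i j"
    and "basic_weight n i j lam"
  shows "\<exists>m::nat. m > 0 \<and> (\<exists>\<mu> \<in> listed_weights n i j. lam = vscale (real m) \<mu>)"
proof -
  let ?S = "{1..n+1}"
  define \<mu> where "\<mu> = dom_weight n lam"
  have mo: "\<mu> \<in> weyl_orbit n lam" and md: "dominant n \<mu>"
    using dom_weight_props[of n lam] by (auto simp: \<mu>_def)
  obtain \<sigma> where sp: "\<sigma> permutes ?S" and ms: "\<mu> = lam \<circ> \<sigma>" using orbit_perm[OF mo] by blast
  have intw: "integral_weight n lam"
    and Ic: "\<forall>\<alpha> \<in> simple_roots n - {simple_root i}. ip n lam (coroot n \<alpha>) \<in> \<int> \<and> ip n lam (coroot n \<alpha>) > 0"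
    and Jc: "{\<alpha> \<in> simple_roots n. ip n \<mu> \<alpha> = 0} = simple_roots n - {simple_root j}"
    using assms(5) unfolding basic_weight_def \<mu>_def by auto
  have V: "lam \<in> Vspace n" using intw by (simp add: integral_weight_def)
  have Jk: "\<mu> k = \<mu> (Suc k) \<longleftrightarrow> k \<noteq> j" if k: "k \<in> {1..n}" for k
  proof -
    have sr: "simple_root k \<in> simple_roots n" using k by (simp add: simple_roots_def)
    have "(simple_root k \<in> {\<alpha> \<in> simple_roots n. ip n \<mu> \<alpha> = 0}) = (simple_root k \<in> simple_roots n - {simple_root j})"
      using Jc by simp
    then have "(\<mu> k - \<mu> (Suc k) = 0) = (simple_root k \<noteq> simple_root j)"
      using sr ip_simple'[OF k] by simp
    then show ?thesis using simple_root_inj by auto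
  qed
  have Ik: "lam k > lam (k + 1)" if k: "k \<in> {1..n}" "k \<noteq> i" for k
  proof -
    have "simple_root k \<in> simple_roots n - {simple_root i}"
      using k simple_root_inj by (auto simp: simple_roots_def)
    then have "ip n lam (coroot n (simple_root k)) > 0" using Ic by blast
    then show ?thesis using ip_simple[OF k(1), of lam] by simp
  qed
  define a where "a = \<mu> 1"
  define b where "b = \<mu> (Suc j)"
  have j1: "1 \<le> j" "j \<le> n" using assms(3) by auto
  have ma: "\<mu> t = a" if "1 \<le> t" "t \<le> j" for t
  proof -
    have "t \<le> j \<longrightarrow> \<mu> t = a" using that(1)
    proof (induction t rule: dec_induct)
      case base then show ?case by (simp add: a_def)
    next
      case (step m)
      show ?case
      proof
        assume "Suc m \<le> j"
        then have mm: "m \<in> {1..n}" "m \<noteq> j" using step(1) j1 by auto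
        have "m \<le> j" using \<open>Suc m \<le> j\<close> by simp
        then show "\<mu> (Suc m) = a" using Jk[OF mm(1)] mm(2) step(3) by simp
      qed
    qed
    then show ?thesis using that by simp
  qed
  have mb: "\<mu> t = b" if "Suc j \<le> t" "t \<le> n+1" for t
  proof -
    have "t \<le> n+1 \<longrightarrow> \<mu> t = b" using that(1)
    proof (induction t rule: dec_induct)
      case base then show ?case by (simp add: b_def)
    next
      case (step m)
      show ?case
      proof
        assume "Suc m \<le> n+1"
        then have mm: "m \<in> {1..n}" "m \<noteq> j" using step(1) j1 by auto
        have "m \<le> n+1" using \<open>Suc m \<le> n+1\<close> by simp
        then show "\<mu> (Suc m) = b" using Jk[OF mm(1)] mm(2) step(3) by simp
      qed
    qed
    then show ?thesis using that by simp
  qed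
  have ab: "a > b"
  proof -
    have "\<mu> (Suc j) \<le> \<mu> j" by (rule dom_mono[OF md]) (use j1 in auto)
    moreover have "\<mu> j \<noteq> \<mu> (Suc j)" using Jk[of j] j1 by auto
    ultimately show ?thesis using ma[of j] j1 by (simp add: b_def)
  qed
  have sum0: "(\<Sum>t\<in>?S. \<mu> t) = 0"
  proof -
    have "(\<Sum>t\<in>?S. lam t) = (\<Sum>t\<in>?S. (lam \<circ> \<sigma>) t)" using sum.permute[OF sp, of lam] by simp
    then show ?thesis using V ms by (simp add: Vspace_def)
  qed
  have "(\<Sum>t\<in>?S. \<mu> t) = (\<Sum>t\<in>{1..j}. \<mu> t) + (\<Sum>t\<in>{Suc j..n+1}. \<mu> t)"
  proof -
    have "?S = {1..j} \<union> {Suc j..n+1}" using j1 by auto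
    then show ?thesis by (simp add: sum.union_disjoint)
  qed
  also have "\<dots> = (\<Sum>t\<in>{1..j}. a) + (\<Sum>t\<in>{Suc j..n+1}. b)"
    using ma mb by simp
  also have "\<dots> = real j * a + real (n + 1 - j) * b" by simp
  finally have hj: "real j * a + real (n + 1 - j) * b = 0" using sum0 by simp
  have vals: "lam t = a \<or> lam t = b" if t: "t \<in> ?S" for t
  proof -
    have it: "inv \<sigma> t \<in> ?S" using permutes_in_image[OF permutes_inv[OF sp]] t by simp
    have "lam t = \<mu> (inv \<sigma> t)" using ms permutes_inverses(1)[OF sp] by simp
    then show ?thesis using ma mb it by (cases "inv \<sigma> t \<le> j") auto
  qed
  have "a - b \<in> \<int>"
  proof -
    have d: "\<sigma> j \<noteq> \<sigma> (Suc j)" using permutes_inj[OF sp] by (auto dest: injD)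
    have r: "\<sigma> j \<in> ?S" "\<sigma> (Suc j) \<in> ?S" using permutes_in_image[OF sp] j1 by auto
    have "vdiff (ebasis (\<sigma> j)) (ebasis (\<sigma> (Suc j))) \<in> roots n"
      unfolding roots_def using d r by blast
    then have "ip n lam (coroot n (vdiff (ebasis (\<sigma> j)) (ebasis (\<sigma> (Suc j))))) \<in> \<int>"
      using intw by (simp add: integral_weight_def)
    then have "lam (\<sigma> j) - lam (\<sigma> (Suc j)) \<in> \<int>" using ip_coroot[OF r d] by simp
    moreover have "lam (\<sigma> j) = a" "lam (\<sigma> (Suc j)) = b" using ma[of j] j1 ms b_def by auto
    ultimately show ?thesis by simp
  qed
  then obtain z :: int where z: "a - b = of_int z" by (auto elim: Ints_cases)
  define m where "m = nat z"
  have am: "a - b = real m" and m0: "m > 0" using z ab by (auto simp: m_def)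
  have ee0: "(1::nat)+1 = 2" "(2::nat)+1 = 3" "(3::nat)+1 = 4" "(4::nat)+1 = 5" by simp_all
  have n3: "n \<le> 3"
  proof (rule ccontr)
    assume "\<not> n \<le> 3"
    then have n4: "n \<ge> 4" by simp
    have w: "lam 1 = a \<or> lam 1 = b" "lam 2 = a \<or> lam 2 = b" "lam 3 = a \<or> lam 3 = b"
      "lam 4 = a \<or> lam 4 = b" "lam 5 = a \<or> lam 5 = b"
      using vals[of 1] vals[of 2] vals[of 3] vals[of 4] vals[of 5] n4 by simp_all
    show False
    proof (cases "i \<ge> 3")
      case True
      then have "lam 1 > lam 2" "lam 2 > lam 3" using Ik[of 1, unfolded ee0] Ik[of 2, unfolded ee0] n4 by simp_all
      then show False using w(1-3) by linarith
    next
      case False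
      then have "lam 3 > lam 4" "lam 4 > lam 5" using Ik[of 3, unfolded ee0] Ik[of 4, unfolded ee0] n4 by simp_all
      then show False using w(3-5) by linarith
    qed
  qed
  have ee: "(1::nat)+1 = 2" "(2::nat)+1 = 3" "(3::nat)+1 = 4" "(4::nat)+1 = 5" by simp_all
  have S: "(\<Sum>t\<in>?S. lam t) = 0" using V by (simp add: Vspace_def)
  have v1: "lam 1 = a \<or> lam 1 = b" using vals[of 1] by simp
  have v2: "lam 2 = a \<or> lam 2 = b" using vals[of 2] assms(1) by simp
  have "\<exists>\<mu>\<in>listed_weights n i j. lam = vscale (real m) \<mu>"
  proof -
    consider "n = 1" | "n = 2" | "n = 3" using n3 assms(1) by linarith
    then show ?thesis
    proof cases
      case 1
      have V': "lam \<in> Vspace 1" using V 1 by simp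
      have i': "i \<in> {1..1}" "j \<in> {1..1}" using assms(2,3) 1 by auto
      have hj': "real j * a + real (2 - j) * b = 0" using hj unfolding 1 ee .
      have e: "{1..1+1::nat} = {1,2}" by auto
      have hs: "lam 1 + lam 2 = 0" using S unfolding 1 e by simp
      show ?thesis unfolding 1 by (rule case_n1[OF V' i' v1 v2 ab am hj' hs])
    next
      case 2
      have V': "lam \<in> Vspace 2" using V 2 by simp
      have i': "i \<in> {1..2}" "j \<in> {1..2}" using assms(2,3) 2 by auto
      have hj': "real j * a + real (3 - j) * b = 0" using hj unfolding 2 ee .
      have e: "{1..2+1::nat} = {1,2,3}" by auto
      have hs: "lam 1 + lam 2 + lam 3 = 0" using S unfolding 2 e by simp
      have v3: "lam 3 = a \<or> lam 3 = b" using vals[of 3] 2 by simp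
      have k1: "i \<noteq> 1 \<longrightarrow> lam 1 > lam 2" using Ik[of 1, unfolded ee0] 2 by simp
      have k2: "i \<noteq> 2 \<longrightarrow> lam 2 > lam 3" using Ik[of 2, unfolded ee0] 2 by simp
      show ?thesis unfolding 2 by (rule case_n2[OF V' i' v1 v2 v3 ab am hj' hs k1 k2])
    next
      case 3
      have V': "lam \<in> Vspace 3" using V 3 by simp
      have i': "i \<in> {1..3}" "j \<in> {1..3}" using assms(2,3) 3 by auto
      have hj': "real j * a + real (4 - j) * b = 0" using hj unfolding 3 ee .
      have e: "{1..3+1::nat} = {1,2,3,4}" by auto
      have hs: "lam 1 + lam 2 + lam 3 + lam 4 = 0" using S unfolding 3 e by simp
      have v3: "lam 3 = a \<or> lam 3 = b" using vals[of 3] 3 by simp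
      have v4: "lam 4 = a \<or> lam 4 = b" using vals[of 4] 3 by simp
      have k1: "i \<noteq> 1 \<longrightarrow> lam 1 > lam 2" using Ik[of 1, unfolded ee0] 3 by simp
      have k2: "i \<noteq> 2 \<longrightarrow> lam 2 > lam 3" using Ik[of 2, unfolded ee0] 3 by simp
      have k3: "i \<noteq> 3 \<longrightarrow> lam 3 > lam 4" using Ik[of 3, unfolded ee0] 3 by simp
      show ?thesis unfolding 3 by (rule case_n3[OF V' i' v1 v2 v3 v4 ab am hj' hs k1 k2 k3])
    qed
  qed
  then show ?thesis using m0 by blast
qed

end
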